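(* The space $X_\Delta=\mathbb C^d_\Delta/\!/N_{\mathbb C}$ is compact, i.e. every open covering of $X_\Delta$ admits a finite subcovering.
   Context: Let $\mathfrak d$ be an $n$-dimensional real vector space, $\mathfrak d_{\mathbb C}=\mathfrak d\oplus i\mathfrak d$. A quasilattice in $\mathfrak d$ is the $\mathbb Z$-submodule generated by a finite set of vectors spanning $\mathfrak d$. Let $\Delta\subset\mathfrak d^*$ be an $n$-dimensional convex polytope (not necessarily rational or simple) with $d$ facets, $\Delta=\bigcap_{j=1}^d\{\mu:\langle\mu,X_j\rangle\ge\lambda_j\}$, with chosen inward normals $X_1,\dots,X_d\in\mathfrak d$, and $Q$ a quasilattice containing them. For each face $F$, $I_F=\{j:\langle\mu,X_j\rangle=\lambda_j\text{ on }F\}$; $\mathbb C^d_\Delta=\bigcup_F\{z\in\mathbb C^d:z_j\ne0\ \forall j\notin I_F\}$ (all faces). $\pi:\mathbb R^d\to\mathfrak d$, $\pi_{\mathbb C}$, $e_j\mapsto X_j$; $\mathfrak n=\ker\pi$. $T^d_{\mathbb C}=\mathbb C^d/\mathbb Z^d$ acts on $\mathbb C^d$ by $\exp(Z)\cdot z=(e^{2\pi iZ_j}z_j)_j$; $T^d=\mathbb R^d/\mathbb Z^d$; $N=\ker(T^d\to\mathfrak d/Q)$, $N_{\mathbb C}=\ker(T^d_{\mathbb C}\to\mathfrak d_{\mathbb C}/Q)$, $A=\exp(i\mathfrak n)$. $X_\Delta$ is the quotient of $\mathbb C^d_\Delta$ by the equivalence relation $z\sim w\iff N\,\overline{Az}\cap\overline{Aw}\ne\emptyset$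 (closures in $\mathbb C^d_\Delta$), with the quotient topology (not necessarily Hausdorff). *)

theory Defs
  imports "HOL-Analysis.Analysis"
begin

definition quot_topology :: "'a topology \<Rightarrow> ('a \<Rightarrow> 'b) \<Rightarrow> 'b topology" where
  "quot_topology X f =
     topology (\<lambda>U. U \<subseteq> f ` topspace X \<and> openin X {x \<in> topspace X. f x \<in> U})"

definition quasilattice :: "'a::euclidean_space set \<Rightarrow> bool" where
  "quasilattice Q \<longleftrightarrow> (\<exists>S. finite S \<and> span S = UNIV \<and>
      Q = {(\<Sum>v\<in>S. of_int (c v) *\<^sub>R v) | c. True})"

text \<open>The polytope Delta, presented by inward normals X and constants lam.
  The dual space is identified with the space itself via the inner product.\<close>
definition Delta_poly :: "('k \<Rightarrow> 'a::euclidean_space) \<Rightarrow> ('k \<Rightarrow> real) \<Rightarrow> 'a set" where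
  "Delta_poly X lam = (\<Inter>j. {\<mu>. \<mu> \<bullet> X j \<ge> lam j})"

definition active_set :: "('k \<Rightarrow> 'a::euclidean_space) \<Rightarrow> ('k \<Rightarrow> real) \<Rightarrow> 'a set \<Rightarrow> 'k set" where
  "active_set X lam F = {j. \<forall>\<mu>\<in>F. \<mu> \<bullet> X j = lam j}"

definition Cd_Delta :: "('k::finite \<Rightarrow> 'a::euclidean_space) \<Rightarrow> ('k \<Rightarrow> real) \<Rightarrow> (complex^'k) set" where
  "Cd_Delta X lam = (\<Union>F\<in>{F. F face_of Delta_poly X lam \<and> F \<noteq> {}}.
      {z. \<forall>j. j \<notin> active_set X lam F \<longrightarrow> z $ j \<noteq> 0})"

definition torus_act :: "complex^'k \<Rightarrow> complex^'k \<Rightarrow> complex^'k" where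
  "torus_act Z z = (\<chi> j. exp (2 * of_real pi * \<i> * Z $ j) * z $ j)"

definition pi_map :: "('k::finite \<Rightarrow> 'a::real_vector) \<Rightarrow> real^'k \<Rightarrow> 'a" where
  "pi_map X t = (\<Sum>j\<in>UNIV. (t $ j) *\<^sub>R X j)"

text \<open>The orbit A z, where A = exp(i n), n = ker pi.\<close>
definition A_orbit :: "('k::finite \<Rightarrow> 'a::real_vector) \<Rightarrow> complex^'k \<Rightarrow> (complex^'k) set" where
  "A_orbit X z = {torus_act (\<chi> j. \<i> * of_real (t $ j)) z | t. pi_map X t = 0}"

text \<open>N . S, where N = ker (T^d \<rightarrow> d/Q) (represented by real vectors s with pi s in Q).\<close>
definition N_act_set :: "('k::finite \<Rightarrow> 'a::real_vector) \<Rightarrow> 'a set \<Rightarrow> (complex^'k) set \<Rightarrow> (complex^'k) set" where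
  "N_act_set X Q S = {torus_act (\<chi> j. of_real (s $ j)) w | s w. pi_map X s \<in> Q \<and> w \<in> S}"

definition X_rel :: "('k::finite \<Rightarrow> 'a::euclidean_space) \<Rightarrow> ('k \<Rightarrow> real) \<Rightarrow> 'a set
      \<Rightarrow> complex^'k \<Rightarrow> complex^'k \<Rightarrow> bool" where
  "X_rel X lam Q z w \<longleftrightarrow> z \<in> Cd_Delta X lam \<and> w \<in> Cd_Delta X lam \<and>
     N_act_set X Q (closure (A_orbit X z) \<inter> Cd_Delta X lam)
       \<inter> (closure (A_orbit X w) \<inter> Cd_Delta X lam) \<noteq> {}"

definition X_class :: "('k::finite \<Rightarrow> 'a::euclidean_space) \<Rightarrow> ('k \<Rightarrow> real) \<Rightarrow> 'a set
      \<Rightarrow> complex^'k \<Rightarrow> (complex^'k) set" where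
  "X_class X lam Q z = {w. equivclp (X_rel X lam Q) z w}"

definition X_Delta :: "('k::finite \<Rightarrow> 'a::euclidean_space) \<Rightarrow> ('k \<Rightarrow> real) \<Rightarrow> 'a set
      \<Rightarrow> (complex^'k) set topology" where
  "X_Delta X lam Q = quot_topology (subtopology euclidean (Cd_Delta X lam)) (X_class X lam Q)"

end

theory Submission
  imports Defs
begin


lemma quot_istop: "istopology (\<lambda>U. U \<subseteq> f ` topspace X \<and> openin X {x \<in> topspace X. f x \<in> U})"
proof -
  have 1: "openin X {x \<in> topspace X. f x \<in> S \<inter> T}"
    if "openin X {x \<in> topspace X. f x \<in> S}" "openin X {x \<in> topspace X. f x \<in> T}" for S T
  proof -
    have "{x \<in> topspace X. f x \<in> S \<inter> T} = {x \<in> topspace X. f x \<in> S} \<inter> {x \<in> topspace X. f x \<in> T}" by auto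
    then show ?thesis using that by auto
  qed
  have 2: "openin X {x \<in> topspace X. f x \<in> \<Union>K}"
    if "\<forall>S\<in>K. openin X {x \<in> topspace X. f x \<in> S}" for K
  proof -
    have "{x \<in> topspace X. f x \<in> \<Union>K} = (\<Union>S\<in>K. {x \<in> topspace X. f x \<in> S})" by auto
    then show ?thesis using that by auto
  qed
  show ?thesis unfolding istopology_def using 1 2 by blast
qed

lemma quot_open: "openin (quot_topology X f) U \<longleftrightarrow> U \<subseteq> f ` topspace X \<and> openin X {x \<in> topspace X. f x \<in> U}"
  unfolding quot_topology_def using topology_inverse'[OF quot_istop, of f X] by simp

lemma quot_topspace: "topspace (quot_topology X f) = f ` topspace X"
proof -
  have "openin (quot_topology X f) (f ` topspace X)"
  proof -
    have "{x \<in> topspace X. f x \<in> f ` topspace X} = topspace X" by blast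
    then show ?thesis unfolding quot_open by simp
  qed
  then have "f ` topspace X \<subseteq> topspace (quot_topology X f)" by (rule openin_subset)
  moreover have "topspace (quot_topology X f) \<subseteq> f ` topspace X"
    using quot_open[of X f "topspace (quot_topology X f)"] by simp
  ultimately show ?thesis by blast
qed

lemma quot_cont: "continuous_map X (quot_topology X f) f"
  unfolding continuous_map_def quot_topspace quot_open by auto

lemma quot_compact: "compactin X K \<Longrightarrow> f ` K = f ` topspace X \<Longrightarrow> compact_space (quot_topology X f)"
  unfolding compact_space_def quot_topspace
  using image_compactin[OF _ quot_cont, of X K f] by simp



lemma kkt:
  fixes X :: "'k::finite \<Rightarrow> 'a::euclidean_space"
  assumes mu0: "\<forall>j. \<mu>0 \<bullet> X j \<ge> lam j" "\<forall>j\<in>Z. \<mu>0 \<bullet> X j = lam j"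
  and min: "\<And>\<mu>. \<forall>j. \<mu> \<bullet> X j \<ge> lam j \<Longrightarrow> \<forall>j\<in>Z. \<mu> \<bullet> X j = lam j \<Longrightarrow> \<mu>0 \<bullet> y \<le> \<mu> \<bullet> y"
  shows "\<exists>s. (\<forall>j. j\<notin>Z \<longrightarrow> s j \<ge> 0) \<and> (\<forall>j. \<mu>0 \<bullet> X j \<noteq> lam j \<longrightarrow> s j = 0)
             \<and> (\<Sum>j\<in>UNIV. s j *\<^sub>R X j) = y"
proof -
  define I where "I = {j. \<mu>0 \<bullet> X j = lam j}"
  define Gen where "Gen = X ` I \<union> uminus ` X ` Z"
  define E where "E = {\<Sum>j\<in>UNIV. s j *\<^sub>R X j | s. (\<forall>j. j\<notin>Z \<longrightarrow> s j \<ge> 0) \<and> (\<forall>j. j\<notin>I \<longrightarrow> s j = 0)}"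
  have ZI: "Z \<subseteq> I" using mu0 I_def by auto
  have cE: "convex_cone E"
    unfolding convex_cone_iff
  proof (intro conjI ballI allI impI)
    show "0 \<in> E" unfolding E_def by (rule CollectI, rule exI[of _ "\<lambda>j. 0"]) simp
  next
    fix x y assume "x \<in> E" "y \<in> E"
    then obtain s1 s2 where s1: "x = (\<Sum>j\<in>UNIV. s1 j *\<^sub>R X j)" "(\<forall>j. j\<notin>Z \<longrightarrow> s1 j \<ge> 0)" "(\<forall>j. j\<notin>I \<longrightarrow> s1 j = 0)"
      and s2: "y = (\<Sum>j\<in>UNIV. s2 j *\<^sub>R X j)" "(\<forall>j. j\<notin>Z \<longrightarrow> s2 j \<ge> 0)" "(\<forall>j. j\<notin>I \<longrightarrow> s2 j = 0)"
      unfolding E_def by blast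
    have "x + y = (\<Sum>j\<in>UNIV. (s1 j + s2 j) *\<^sub>R X j)"
      unfolding s1(1) s2(1) by (simp add: sum.distrib scaleR_add_left)
    then show "x + y \<in> E" unfolding E_def using s1 s2
      by (intro CollectI exI[of _ "\<lambda>j. s1 j + s2 j"]) auto
  next
    fix x and c :: real assume "x \<in> E" "0 \<le> c"
    then obtain s1 where s1: "x = (\<Sum>j\<in>UNIV. s1 j *\<^sub>R X j)" "(\<forall>j. j\<notin>Z \<longrightarrow> s1 j \<ge> 0)" "(\<forall>j. j\<notin>I \<longrightarrow> s1 j = 0)"
      unfolding E_def by blast
    have "c *\<^sub>R x = (\<Sum>j\<in>UNIV. (c * s1 j) *\<^sub>R X j)"
      unfolding s1(1) by (simp add: scaleR_sum_right)
    then show "c *\<^sub>R x \<in> E" unfolding E_def using s1 \<open>0 \<le> c\<close>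
      by (intro CollectI exI[of _ "\<lambda>j. c * s1 j"]) auto
  qed
  have genE: "Gen \<subseteq> E"
  proof
    fix g assume "g \<in> Gen"
    then consider i where "i \<in> I" "g = X i" | i where "i \<in> Z" "g = - X i"
      unfolding Gen_def by blast
    then show "g \<in> E"
    proof cases
      case 1
      have "(\<Sum>j\<in>UNIV. (if j = i then 1 else 0) *\<^sub>R X j) = X i"
        by (subst sum.cong[OF refl, of _ _ "\<lambda>j. if j = i then X j else 0"]) auto
      then show ?thesis unfolding E_def using 1
        by (intro CollectI exI[of _ "\<lambda>j. if j = i then 1 else 0"]) auto
    next
      case 2
      have "(\<Sum>j\<in>UNIV. (if j = i then -1 else 0) *\<^sub>R X j) = - X i"
        by (subst sum.cong[OF refl, of _ _ "\<lambda>j. if j = i then - X j else 0"]) auto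
      then show ?thesis unfolding E_def using 2 ZI
        by (intro CollectI exI[of _ "\<lambda>j. if j = i then -1 else 0"]) auto
    qed
  qed
  have hullE: "convex_cone hull Gen \<subseteq> E" using hull_minimal[of Gen E convex_cone] genE cE by blast
  have "y \<in> convex_cone hull Gen"
  proof (rule ccontr)
    assume ny: "y \<notin> convex_cone hull Gen"
    have "finite Gen" unfolding Gen_def by simp
    then have cl: "closed (convex_cone hull Gen)" by (rule closed_convex_cone_hull)
    obtain a b where ab: "a \<bullet> y < b" "\<forall>x\<in>convex_cone hull Gen. a \<bullet> x > b"
      using separating_hyperplane_closed_point[OF convex_convex_cone_hull cl ny] by blast
    have b0: "b < 0" using ab(2) convex_cone_hull_contains_0 by force
    have nonneg: "a \<bullet> x \<ge> 0" if xin: "x \<in> convex_cone hull Gen" for x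
    proof (rule ccontr)
      assume "\<not> a \<bullet> x \<ge> 0"
      then have neg: "a \<bullet> x < 0" by simp
      define c where "c = (b - 1) / (a \<bullet> x)"
      have "c \<ge> 0" using neg b0 by (simp add: c_def divide_nonpos_neg)
      then have "c *\<^sub>R x \<in> convex_cone hull Gen" using xin by (rule convex_cone_hull_mul[rotated])
      then have "a \<bullet> (c *\<^sub>R x) > b" using ab(2) by blast
      moreover have "a \<bullet> (c *\<^sub>R x) = b - 1" using neg by (simp add: c_def)
      ultimately show False by simp
    qed
    have aI: "a \<bullet> X j \<ge> 0" if "j \<in> I" for j
      using nonneg[OF hull_inc] that unfolding Gen_def by blast
    have aZ: "a \<bullet> X j = 0" if "j \<in> Z" for j
    proof -
      have "a \<bullet> (- X j) \<ge> 0" using nonneg[OF hull_inc] that unfolding Gen_def by blast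
      then show ?thesis using aI[of j] that ZI by auto
    qed
    have ay: "a \<bullet> y < 0" using ab b0 by simp
    have ev: "eventually (\<lambda>\<epsilon>. \<forall>j. (\<mu>0 + \<epsilon> *\<^sub>R a) \<bullet> X j \<ge> lam j) (at_right 0)"
    proof (rule eventually_all_finite)
      fix j
      show "eventually (\<lambda>\<epsilon>. (\<mu>0 + \<epsilon> *\<^sub>R a) \<bullet> X j \<ge> lam j) (at_right 0)"
      proof (cases "j \<in> I")
        case True
        show ?thesis
        proof (rule eventually_mono[OF eventually_at_right_less])
          fix \<epsilon> :: real assume "0 < \<epsilon>"
          then have "0 \<le> \<epsilon> * (a \<bullet> X j)" using aI[OF True] by simp
          then show "(\<mu>0 + \<epsilon> *\<^sub>R a) \<bullet> X j \<ge> lam j" using True unfolding I_def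
            by (simp add: inner_add_left)
        qed
      next
        case False
        then have "\<mu>0 \<bullet> X j \<noteq> lam j" unfolding I_def by simp
        moreover have "\<mu>0 \<bullet> X j \<ge> lam j" using mu0(1) by simp
        ultimately have gt: "\<mu>0 \<bullet> X j > lam j" by linarith
        have "((\<lambda>\<epsilon>. \<mu>0 \<bullet> X j + \<epsilon> * (a \<bullet> X j)) \<longlongrightarrow> \<mu>0 \<bullet> X j + 0 * (a \<bullet> X j)) (at_right 0)"
          by (intro tendsto_intros)
        then have "((\<lambda>\<epsilon>. \<mu>0 \<bullet> X j + \<epsilon> * (a \<bullet> X j)) \<longlongrightarrow> \<mu>0 \<bullet> X j) (at_right 0)" by simp
        from order_tendstoD(1)[OF this gt]
        show ?thesis by (rule eventually_mono) (simp add: inner_add_left)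
      qed
    qed
    have "eventually (\<lambda>\<epsilon>. 0 < \<epsilon> \<and> (\<forall>j. (\<mu>0 + \<epsilon> *\<^sub>R a) \<bullet> X j \<ge> lam j)) (at_right (0::real))"
      by (rule eventually_conj[OF eventually_at_right_less ev])
    from eventually_happens'[OF trivial_limit_at_right_real this]
    obtain \<epsilon> :: real where eps: "0 < \<epsilon>" "\<forall>j. (\<mu>0 + \<epsilon> *\<^sub>R a) \<bullet> X j \<ge> lam j"
      by blast
    have "\<forall>j\<in>Z. (\<mu>0 + \<epsilon> *\<^sub>R a) \<bullet> X j = lam j"
      using mu0(2) aZ by (simp add: inner_add_left)
    then have "\<mu>0 \<bullet> y \<le> (\<mu>0 + \<epsilon> *\<^sub>R a) \<bullet> y" using min[OF eps(2)] by simp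
    moreover have "(\<mu>0 + \<epsilon> *\<^sub>R a) \<bullet> y = \<mu>0 \<bullet> y + \<epsilon> * (a \<bullet> y)" by (simp add: inner_add_left)
    moreover have "\<epsilon> * (a \<bullet> y) < 0" using eps(1) ay by (simp add: mult_pos_neg)
    ultimately show False by simp
  qed
  then have "y \<in> E" using hullE by blast
  then show ?thesis unfolding E_def I_def by auto
qed



definition Gface :: "('k::finite \<Rightarrow> 'a::euclidean_space) \<Rightarrow> ('k \<Rightarrow> real) \<Rightarrow> 'k set \<Rightarrow> 'a set" where
  "Gface X lam S = {\<mu> \<in> Delta_poly X lam. \<forall>j\<in>S. \<mu> \<bullet> X j = lam j}"

definition KS :: "'k::finite set \<Rightarrow> (complex^'k) set" where
  "KS S = {w. \<forall>j. norm (w$j) \<le> 1 \<and> (j \<notin> S \<longrightarrow> norm (w$j) = 1)}"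

lemma Delta_mem: "\<mu> \<in> Delta_poly X lam \<longleftrightarrow> (\<forall>j. \<mu> \<bullet> X j \<ge> lam j)"
  unfolding Delta_poly_def by auto

lemma convex_Delta: "convex (Delta_poly X lam)"
  unfolding Delta_poly_def
  by (intro convex_INT ballI) (subst inner_commute, rule convex_halfspace_ge)

lemma Gface_face: "Gface X lam S face_of Delta_poly X lam"
proof (cases "S = {}")
  case True
  then show ?thesis unfolding Gface_def using face_of_refl[OF convex_Delta] by simp
next
  case False
  have eq: "Gface X lam S = \<Inter> ((\<lambda>j. Delta_poly X lam \<inter> {x. X j \<bullet> x = lam j}) ` S)"
    using False unfolding Gface_def by (auto simp: inner_commute)
  show ?thesis unfolding eq
  proof (rule face_of_Inter)
    show "(\<lambda>j. Delta_poly X lam \<inter> {x. X j \<bullet> x = lam j}) ` S \<noteq> {}" using False by simp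
    fix T assume "T \<in> (\<lambda>j. Delta_poly X lam \<inter> {x. X j \<bullet> x = lam j}) ` S"
    then obtain j where T: "T = Delta_poly X lam \<inter> {x. X j \<bullet> x = lam j}" by blast
    show "T face_of Delta_poly X lam" unfolding T
      by (rule face_of_Int_supporting_hyperplane_ge[OF convex_Delta])
         (simp add: Delta_mem inner_commute)
  qed
qed

lemma KS_sub:
  fixes X :: "'k::finite \<Rightarrow> 'a::euclidean_space"
  assumes "Gface X lam S \<noteq> {}"
  shows "KS S \<subseteq> Cd_Delta X lam"
proof
  fix w assume w: "w \<in> KS S"
  have act: "S \<subseteq> active_set X lam (Gface X lam S)"
    unfolding active_set_def Gface_def by auto
  have "\<forall>j. j \<notin> active_set X lam (Gface X lam S) \<longrightarrow> w $ j \<noteq> 0"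
  proof (intro allI impI)
    fix j assume "j \<notin> active_set X lam (Gface X lam S)"
    then have "j \<notin> S" using act by blast
    then have "norm (w$j) = 1" using w unfolding KS_def by blast
    then show "w $ j \<noteq> 0" by auto
  qed
  then show "w \<in> Cd_Delta X lam" unfolding Cd_Delta_def
    using Gface_face[of X lam S] assms by blast
qed

lemma KS_compact: "compact (KS S)"
  unfolding compact_eq_bounded_closed
proof
  have "norm w \<le> real CARD('a)" if "w \<in> KS S" for w :: "complex^'a"
  proof -
    have "norm w \<le> (\<Sum>i\<in>UNIV. norm (w$i))" by (simp add: norm_vec_def L2_set_le_sum)
    also have "\<dots> \<le> (\<Sum>i\<in>(UNIV::'a set). 1)" using that unfolding KS_def by (intro sum_mono) blast
    finally show ?thesis by simp
  qed
  then show "bounded (KS S)" unfolding bounded_iff by blast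
  have eq: "KS S = {w. \<forall>j. norm (w$j) \<le> 1} \<inter> (\<Inter>j\<in>-S. {w. norm (w$j) = 1})"
    unfolding KS_def by auto
  have c1: "continuous_on UNIV (\<lambda>w::complex^'a. norm (w$j))" for j
    by (intro continuous_intros)
  show "closed (KS S)" unfolding eq
    by (intro closed_Int closed_INT closed_Collect_all ballI closed_Collect_le closed_Collect_eq c1
        continuous_intros)
qed

lemma norm_torus:
  "norm ((torus_act (\<chi> j. \<i> * complex_of_real (t$j)) z) $ j) = exp (-(2*pi*(t$j))) * norm (z$j)"
proof -
  have "2 * complex_of_real pi * \<i> * (\<i> * complex_of_real (t$j)) = complex_of_real (-(2*pi*t$j))"
    by (simp add: algebra_simps)
  then have "exp (2 * complex_of_real pi * \<i> * (\<i> * complex_of_real (t$j))) = complex_of_real (exp (-(2*pi*(t$j))))"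
    by (simp only: exp_of_real)
  then show ?thesis unfolding torus_act_def by (simp add: norm_mult)
qed



lemma reach:
  fixes X :: "'k::finite \<Rightarrow> 'a::euclidean_space"
  assumes cpt: "compact (Delta_poly X lam)" and z: "z \<in> Cd_Delta X lam"
  shows "\<exists>t S. pi_map X t = 0 \<and> Gface X lam S \<noteq> {} \<and>
           torus_act (\<chi> j. \<i> * complex_of_real (t$j)) z \<in> KS S"
proof -
  obtain F where F: "F face_of Delta_poly X lam" "F \<noteq> {}"
    and zF: "\<forall>j. j \<notin> active_set X lam F \<longrightarrow> z $ j \<noteq> 0"
    using z unfolding Cd_Delta_def by blast
  define Z where "Z = {j. z$j = 0}"
  have ZF: "Z \<subseteq> active_set X lam F" using zF Z_def by blast
  obtain \<mu>F where \<mu>F: "\<mu>F \<in> F" using F(2) by blast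
  have "\<mu>F \<in> Delta_poly X lam" using face_of_imp_subset[OF F(1)] \<mu>F by blast
  then have GZne: "Gface X lam Z \<noteq> {}"
    using ZF \<mu>F unfolding Gface_def active_set_def by blast
  have eqG: "Gface X lam Z = Delta_poly X lam \<inter> (\<Inter>j\<in>Z. {\<mu>. X j \<bullet> \<mu> = lam j})"
    unfolding Gface_def by (auto simp: inner_commute)
  have cG: "compact (Gface X lam Z)" unfolding eqG
    by (intro compact_Int_closed cpt closed_INT ballI closed_hyperplane)
  define r where "r j = (if z$j = 0 then 0 else ln (norm (z$j)) / (2*pi))" for j
  define y where "y = - (\<Sum>j\<in>UNIV. r j *\<^sub>R X j)"
  have "continuous_on (Gface X lam Z) (\<lambda>\<mu>. \<mu> \<bullet> y)" by (intro continuous_intros)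
  from continuous_attains_inf[OF cG GZne this]
  obtain \<mu>0 where \<mu>0: "\<mu>0 \<in> Gface X lam Z" "\<And>\<mu>. \<mu> \<in> Gface X lam Z \<Longrightarrow> \<mu>0 \<bullet> y \<le> \<mu> \<bullet> y"
    by blast
  have m1: "\<forall>j. \<mu>0 \<bullet> X j \<ge> lam j" "\<forall>j\<in>Z. \<mu>0 \<bullet> X j = lam j"
    using \<mu>0(1) unfolding Gface_def Delta_mem by auto
  have m2: "\<And>\<mu>. \<forall>j. \<mu> \<bullet> X j \<ge> lam j \<Longrightarrow> \<forall>j\<in>Z. \<mu> \<bullet> X j = lam j \<Longrightarrow> \<mu>0 \<bullet> y \<le> \<mu> \<bullet> y"
    using \<mu>0(2) unfolding Gface_def Delta_mem by auto
  obtain s where s: "\<forall>j. j\<notin>Z \<longrightarrow> s j \<ge> 0" "\<forall>j. \<mu>0 \<bullet> X j \<noteq> lam j \<longrightarrow> s j = 0"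
      "(\<Sum>j\<in>UNIV. s j *\<^sub>R X j) = y"
    using kkt[OF m1 m2] by blast
  define t where "t = (\<chi> j. r j + s j)"
  define S where "S = {j. \<mu>0 \<bullet> X j = lam j}"
  have "pi_map X t = (\<Sum>j\<in>UNIV. r j *\<^sub>R X j) + (\<Sum>j\<in>UNIV. s j *\<^sub>R X j)"
    unfolding pi_map_def t_def by (simp add: scaleR_add_left sum.distrib)
  then have pit: "pi_map X t = 0" using s(3) y_def by simp
  have "\<mu>0 \<in> Gface X lam S" using \<mu>0(1) unfolding Gface_def S_def by auto
  then have GSne: "Gface X lam S \<noteq> {}" by blast
  have ZS: "Z \<subseteq> S" using m1 S_def by auto
  have "torus_act (\<chi> j. \<i> * complex_of_real (t$j)) z \<in> KS S"
    unfolding KS_def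
  proof (intro CollectI allI)
    fix j
    let ?w = "torus_act (\<chi> j. \<i> * complex_of_real (t$j)) z"
    show "norm (?w$j) \<le> 1 \<and> (j \<notin> S \<longrightarrow> norm (?w$j) = 1)"
    proof (cases "z$j = 0")
      case True
      then have "j \<in> S" using ZS Z_def by blast
      then show ?thesis using True by (simp add: norm_torus)
    next
      case False
      then have jZ: "j \<notin> Z" using Z_def by simp
      have np: "norm (z$j) > 0" using False by simp
      have "norm (?w$j) = exp (-(2*pi*(r j + s j))) * norm (z$j)"
        using norm_torus[of t z j] by (simp add: t_def)
      also have "-(2*pi*(r j + s j)) = - ln (norm (z$j)) - 2*pi * s j"
        using False by (simp add: r_def algebra_simps)
      also have "exp (- ln (norm (z$j)) - 2*pi * s j) * norm (z$j) = exp (-(2*pi * s j))"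
        using np by (simp add: exp_diff exp_minus field_simps)
      finally have nw: "norm (?w$j) = exp (-(2*pi * s j))" .
      have "s j \<ge> 0" using s(1) jZ by blast
      then have "norm (?w$j) \<le> 1" unfolding nw by simp
      moreover have "j \<notin> S \<longrightarrow> norm (?w$j) = 1" using s(2) unfolding nw S_def by simp
      ultimately show ?thesis by blast
    qed
  qed
  then show ?thesis using pit GSne by blast
qed

lemma class_eq: "X_rel X lam Q z w \<Longrightarrow> X_class X lam Q z = X_class X lam Q w"
  unfolding X_class_def
  by (auto intro: equivclp_trans equivclp_sym r_into_equivclp)

lemma torus_zero: "torus_act (\<chi> j. 0) w = w"
  unfolding torus_act_def by (simp add: vec_eq_iff)

lemma torus_zero': "torus_act (\<chi> j. \<i> * complex_of_real 0) w = w"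
  unfolding torus_act_def by (simp add: vec_eq_iff)

lemma pi_zero: "pi_map X 0 = 0"
  unfolding pi_map_def by simp

lemma rel_step:
  fixes X :: "'k::finite \<Rightarrow> 'a::euclidean_space"
  assumes "z \<in> Cd_Delta X lam" "w \<in> Cd_Delta X lam" "0 \<in> Q"
    and "pi_map X t = 0" "w = torus_act (\<chi> j. \<i> * complex_of_real (t$j)) z"
  shows "X_rel X lam Q z w"
proof -
  have "w \<in> A_orbit X z" unfolding A_orbit_def using assms(4,5) by blast
  then have w1: "w \<in> closure (A_orbit X z) \<inter> Cd_Delta X lam" using assms(2) closure_subset by blast
  have "w = torus_act (\<chi> j. complex_of_real ((0::real^'k)$j)) w" using torus_zero[of w] by simp
  then have "w \<in> N_act_set X Q (closure (A_orbit X z) \<inter> Cd_Delta X lam)"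
    unfolding N_act_set_def mem_Collect_eq
    by (intro exI[of _ "0::real^'k"] exI[of _ w]) (use w1 torus_zero[of w] pi_zero[of X] assms(3) in auto)
  moreover have "w \<in> A_orbit X w" unfolding A_orbit_def
    using pi_zero[of X] torus_zero'[of w] by (intro CollectI exI[of _ 0]) simp
  then have "w \<in> closure (A_orbit X w) \<inter> Cd_Delta X lam" using assms(2) closure_subset by blast
  ultimately show ?thesis unfolding X_rel_def using assms(1,2) by blast
qed


theorem mainTheorem15:
  fixes X :: "'k::finite \<Rightarrow> 'a::euclidean_space"
    and lam :: "'k \<Rightarrow> real"
    and Q :: "'a set"
  assumes "polytope (Delta_poly X lam)"
    and "aff_dim (Delta_poly X lam) = int DIM('a)"
    and "bij_betw (\<lambda>j. {\<mu> \<in> Delta_poly X lam. \<mu> \<bullet> X j = lam j}) UNIV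
           {F. F facet_of Delta_poly X lam}"
    and "quasilattice Q"
    and "\<forall>j. X j \<in> Q"
  shows "compact_space (X_Delta X lam Q)"
proof -
  define K where "K = \<Union> (KS ` {S. Gface X lam S \<noteq> {}})"
  have cpt: "compact (Delta_poly X lam)" using polytope_imp_compact assms(1) by blast
  have KC: "K \<subseteq> Cd_Delta X lam" unfolding K_def using KS_sub by blast
  have Kc: "compact K" unfolding K_def
    by (intro compact_Union finite_imageI) (auto simp: KS_compact)
  have Q0: "0 \<in> Q"
  proof -
    obtain S where S: "Q = {(\<Sum>v\<in>S. of_int (c v) *\<^sub>R v) | c. True}"
      using assms(4) unfolding quasilattice_def by blast
    show ?thesis unfolding S by (intro CollectI exI[of _ "\<lambda>_. 0"]) simp
  qed
  have img: "X_class X lam Q ` K = X_class X lam Q ` Cd_Delta X lam"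
  proof
    show "X_class X lam Q ` K \<subseteq> X_class X lam Q ` Cd_Delta X lam" using KC by blast
    show "X_class X lam Q ` Cd_Delta X lam \<subseteq> X_class X lam Q ` K"
    proof
      fix c assume "c \<in> X_class X lam Q ` Cd_Delta X lam"
      then obtain z where z: "z \<in> Cd_Delta X lam" "c = X_class X lam Q z" by blast
      obtain t S where tS: "pi_map X t = 0" "Gface X lam S \<noteq> {}"
        "torus_act (\<chi> j. \<i> * complex_of_real (t$j)) z \<in> KS S"
        using reach[OF cpt z(1)] by blast
      define w where "w = torus_act (\<chi> j. \<i> * complex_of_real (t$j)) z"
      have wK: "w \<in> K" unfolding K_def w_def using tS by blast
      then have wC: "w \<in> Cd_Delta X lam" using KC by blast
      have "X_rel X lam Q z w" using rel_step[OF z(1) wC Q0 tS(1) w_def] .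
      then have "c = X_class X lam Q w" using class_eq z(2) by metis
      then show "c \<in> X_class X lam Q ` K" using wK by blast
    qed
  qed
  have "compactin (subtopology euclidean (Cd_Delta X lam)) K"
    by (simp add: compactin_subtopology Kc KC)
  then show ?thesis unfolding X_Delta_def
    by (rule quot_compact) (simp add: img)
qed

end
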